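(* On a cell of the combinatorial model whose ribbon graph $\Gamma$ has only odd-valent vertices, for every edge $e$ with length $\ell$ one has $\Omega[\mathcal P(d\ell)]=d\ell$, where $$\Omega=\sum_f\eta_f,\qquad \mathcal P=\frac14\sum_{x\in V(\Gamma)}\sum_{1\le j<k\le n_x}(-1)^{k-j-1}\frac{\partial}{\partial\ell_j}\wedge\frac{\partial}{\partial\ell_k}.$$
   Context: $\Gamma$ is a metric ribbon graph (from a Jenkins–Strebel differential) with edge lengths $\ell_e$ as coordinates on the cell and faces $f$. For a face $f$ with boundary edges $e_1,\dots,e_{n_f}$ in counterclockwise order, $\eta_f=\sum_{1\le j<k\le n_f}d\ell_j\wedge d\ell_k$. In $\mathcal P$, for each vertex $x$ of valence $n_x$, $e_1,\dots,e_{n_x}$ are the edges incident to $x$ in counterclockwise order with lengths $\ell_1,\dots,\ell_{n_x}$ (both $\Omega$ and $\mathcal P$ are independent of the choice of the first edge). $\mathcal P(d\ell)$ denotes the contraction of the bivector with $d\ell$ and $\Omega[X]$ the contraction of the 2-form with the vector field $X$. *)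

theory Defs
  imports Complex_Main "HOL-Combinatorics.Permutations"
begin

(* A ribbon graph is encoded by a finite set H of half-edges, a permutation s0 of H
   (counterclockwise cyclic order of half-edges around each vertex) and a
   fixed-point-free involution s1 of H (the two half-edges of an edge).
   Vertices = s0-cycles, edges = s1-cycles {h, s1 h},
   faces = cycles of  (inv s0) o s1, which traverses every face boundary counterclockwise. *)

definition cyc_len :: "('h \<Rightarrow> 'h) \<Rightarrow> 'h \<Rightarrow> nat" where
  "cyc_len f h = (LEAST n. 0 < n \<and> (f ^^ n) h = h)"

definition orb :: "('h \<Rightarrow> 'h) \<Rightarrow> 'h \<Rightarrow> 'h set" where
  "orb f h = {(f ^^ n) h | n. True}"

definition ribbon_graph :: "'h set \<Rightarrow> ('h \<Rightarrow> 'h) \<Rightarrow> ('h \<Rightarrow> 'h) \<Rightarrow> bool" where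
  "ribbon_graph H s0 s1 \<longleftrightarrow>
     finite H \<and> H \<noteq> {} \<and> s0 permutes H \<and> s1 permutes H \<and>
     (\<forall>h\<in>H. s1 h \<noteq> h \<and> s1 (s1 h) = h) \<and>
     (\<forall>h\<in>H. \<forall>h'\<in>H. (h, h') \<in> ({(a, s0 a) | a. a \<in> H} \<union> {(a, s1 a) | a. a \<in> H})\<^sup>*)"

definition edge_of :: "('h \<Rightarrow> 'h) \<Rightarrow> 'h \<Rightarrow> 'h set" where
  "edge_of s1 h = {h, s1 h}"

definition rg_edges :: "'h set \<Rightarrow> ('h \<Rightarrow> 'h) \<Rightarrow> 'h set set" where
  "rg_edges H s1 = edge_of s1 ` H"

definition rg_vertices :: "'h set \<Rightarrow> ('h \<Rightarrow> 'h) \<Rightarrow> 'h set set" where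
  "rg_vertices H s0 = orb s0 ` H"

definition face_perm :: "('h \<Rightarrow> 'h) \<Rightarrow> ('h \<Rightarrow> 'h) \<Rightarrow> 'h \<Rightarrow> 'h" where
  "face_perm s0 s1 = inv s0 \<circ> s1"

definition rg_faces :: "'h set \<Rightarrow> ('h \<Rightarrow> 'h) \<Rightarrow> ('h \<Rightarrow> 'h) \<Rightarrow> 'h set set" where
  "rg_faces H s0 s1 = orb (face_perm s0 s1) ` H"

(* chosen first half-edge of a vertex / face (all statements are independent of it) *)
definition rep :: "'h set \<Rightarrow> 'h" where
  "rep x = (SOME h. h \<in> x)"

definition valence :: "('h \<Rightarrow> 'h) \<Rightarrow> 'h \<Rightarrow> nat" where
  "valence s0 h = cyc_len s0 h"

(* Tangent vectors X and covectors (1-forms) \<alpha> are given by their coefficients on the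
   coordinate basis \<partial>/\<partial>\<ell>_e resp. d\<ell>_e, i.e. as functions on edges. *)

definition wedge_form :: "'e \<Rightarrow> 'e \<Rightarrow> ('e \<Rightarrow> real) \<Rightarrow> ('e \<Rightarrow> real) \<Rightarrow> real" where
  "wedge_form a b X Y = X a * Y b - X b * Y a"

definition wedge_vec :: "'e \<Rightarrow> 'e \<Rightarrow> ('e \<Rightarrow> real) \<Rightarrow> ('e \<Rightarrow> real) \<Rightarrow> real" where
  "wedge_vec a b \<alpha> \<beta> = \<alpha> a * \<beta> b - \<alpha> b * \<beta> a"

definition eta_face ::
  "('h \<Rightarrow> 'h) \<Rightarrow> ('h \<Rightarrow> 'h) \<Rightarrow> 'h set \<Rightarrow> ('h set \<Rightarrow> real) \<Rightarrow> ('h set \<Rightarrow> real) \<Rightarrow> real" where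
  "eta_face s0 s1 f X Y =
     (let s2 = face_perm s0 s1; h = rep f in
      \<Sum>k<cyc_len s2 h. \<Sum>j<k.
        wedge_form (edge_of s1 ((s2 ^^ j) h)) (edge_of s1 ((s2 ^^ k) h)) X Y)"

definition Omega ::
  "'h set \<Rightarrow> ('h \<Rightarrow> 'h) \<Rightarrow> ('h \<Rightarrow> 'h) \<Rightarrow> ('h set \<Rightarrow> real) \<Rightarrow> ('h set \<Rightarrow> real) \<Rightarrow> real" where
  "Omega H s0 s1 X Y = (\<Sum>f\<in>rg_faces H s0 s1. eta_face s0 s1 f X Y)"

definition Pbiv ::
  "'h set \<Rightarrow> ('h \<Rightarrow> 'h) \<Rightarrow> ('h \<Rightarrow> 'h) \<Rightarrow> ('h set \<Rightarrow> real) \<Rightarrow> ('h set \<Rightarrow> real) \<Rightarrow> real" where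
  "Pbiv H s0 s1 \<alpha> \<beta> = 1/4 *
     (\<Sum>x\<in>rg_vertices H s0. let h = rep x in
        \<Sum>k<cyc_len s0 h. \<Sum>j<k. (-1::real) ^ (k - j - 1) *
          wedge_vec (edge_of s1 ((s0 ^^ j) h)) (edge_of s1 ((s0 ^^ k) h)) \<alpha> \<beta>)"

definition dl :: "'e \<Rightarrow> 'e \<Rightarrow> real" where
  "dl e = (\<lambda>c. if c = e then 1 else 0)"

definition P_contr ::
  "'h set \<Rightarrow> ('h \<Rightarrow> 'h) \<Rightarrow> ('h \<Rightarrow> 'h) \<Rightarrow> ('h set \<Rightarrow> real) \<Rightarrow> ('h set \<Rightarrow> real)" where
  "P_contr H s0 s1 \<alpha> = (\<lambda>b. Pbiv H s0 s1 \<alpha> (dl b))"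

definition Omega_contr ::
  "'h set \<Rightarrow> ('h \<Rightarrow> 'h) \<Rightarrow> ('h \<Rightarrow> 'h) \<Rightarrow> ('h set \<Rightarrow> real) \<Rightarrow> ('h set \<Rightarrow> real) \<Rightarrow> real" where
  "Omega_contr H s0 s1 X = (\<lambda>Y. Omega H s0 s1 X Y)"

(* perimeter of a face as a linear function of the edge lengths (edges counted with multiplicity) *)
definition perimeter ::
  "('h \<Rightarrow> 'h) \<Rightarrow> ('h \<Rightarrow> 'h) \<Rightarrow> 'h set \<Rightarrow> ('h set \<Rightarrow> real) \<Rightarrow> real" where
  "perimeter s0 s1 f L =
     (let s2 = face_perm s0 s1; h = rep f in \<Sum>k<cyc_len s2 h. L (edge_of s1 ((s2 ^^ k) h)))"

(* tangent vectors to the cell of the combinatorial model (face perimeters fixed) *)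
definition cell_tangent ::
  "'h set \<Rightarrow> ('h \<Rightarrow> 'h) \<Rightarrow> ('h \<Rightarrow> 'h) \<Rightarrow> ('h set \<Rightarrow> real) \<Rightarrow> bool" where
  "cell_tangent H s0 s1 Y \<longleftrightarrow>
     (\<forall>e. e \<notin> rg_edges H s1 \<longrightarrow> Y e = 0) \<and>
     (\<forall>f\<in>rg_faces H s0 s1. perimeter s0 s1 f Y = 0)"

end

theory Submission
  imports Defs
begin

lemma cyc_exists:
  assumes "p permutes H" "finite H"
  shows "\<exists>n>0. (p ^^ n) h = h"
proof -
  have "permutation p" using assms permutation_permutes by blast
  then obtain n where "n > 0" "(p ^^ n) h = h" by (rule permutation_self)
  then show ?thesis by blast
qed

lemma cyc_len_pos:
  assumes "p permutes H" "finite H"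
  shows "0 < cyc_len p h" "(p ^^ cyc_len p h) h = h"
proof -
  from cyc_exists[OF assms] have "\<exists>n. 0 < n \<and> (p ^^ n) h = h" by blast
  from LeastI_ex[OF this] show "0 < cyc_len p h" "(p ^^ cyc_len p h) h = h"
    unfolding cyc_len_def by auto
qed

lemma cyc_len_min:
  assumes "0 < m" "m < cyc_len p h" shows "(p ^^ m) h \<noteq> h"
  using assms not_less_Least unfolding cyc_len_def by blast

lemma funpow_split: "(p ^^ (i + d)) h = (p ^^ i) ((p ^^ d) h)"
  by (simp only: funpow_add o_apply)

lemma cyc_distinct:
  assumes "p permutes H" "i < j" "j < cyc_len p h"
  shows "(p ^^ i) h \<noteq> (p ^^ j) h"
proof
  assume eq: "(p ^^ i) h = (p ^^ j) h"
  have inj: "inj (p ^^ i)" using assms(1) permutes_inj inj_fn by blast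
  have jj: "j = i + (j - i)" using assms(2) by simp
  have "(p ^^ j) h = (p ^^ i) ((p ^^ (j - i)) h)"
    by (subst jj) (rule funpow_split)
  with eq have e2: "(p ^^ i) ((p ^^ (j - i)) h) = (p ^^ i) h" by simp
  have "(p ^^ (j - i)) h = h" using injD[OF inj e2] .
  moreover have "0 < j - i" "j - i < cyc_len p h" using assms(2,3) by linarith+
  ultimately show False using cyc_len_min[of "j - i" p h] by simp
qed

lemma cyc_inj:
  assumes "p permutes H"
  shows "inj_on (\<lambda>j. (p ^^ j) h) {..<cyc_len p h}"
proof (rule inj_onI)
  fix x y assume x: "x \<in> {..<cyc_len p h}" and y: "y \<in> {..<cyc_len p h}"
    and eq: "(p ^^ x) h = (p ^^ y) h"
  show "x = y"
  proof (cases x y rule: linorder_cases)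
    case less then show ?thesis using cyc_distinct[OF assms less, of h] y eq by simp
  next
    case greater then show ?thesis using cyc_distinct[OF assms greater, of h] x eq by simp
  qed
qed

lemma orb_eq:
  assumes "p permutes H" "finite H"
  shows "orb p h = (\<lambda>j. (p ^^ j) h) ` {..<cyc_len p h}"
proof -
  note c = cyc_len_pos[OF assms, of h]
  show ?thesis unfolding orb_def
  proof safe
    fix n
    have "(p ^^ (n mod cyc_len p h)) h = (p ^^ n) h" by (rule funpow_mod_eq) (rule c(2))
    then show "(p ^^ n) h \<in> (\<lambda>j. (p ^^ j) h) ` {..<cyc_len p h}"
      using c by (auto intro!: image_eqI[of _ _ "n mod cyc_len p h"])
  qed auto
qed

lemma funpow_in_H:
  assumes "p permutes H" "h \<in> H" shows "(p ^^ n) h \<in> H"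
  by (induct n) (auto simp: assms permutes_in_image[OF assms(1)])

lemma orb_subset:
  assumes "p permutes H" "h \<in> H" shows "orb p h \<subseteq> H"
  using funpow_in_H[OF assms] unfolding orb_def by auto

lemma self_in_orb: "h \<in> orb p h"
  unfolding orb_def by (auto intro: exI[of _ 0])

lemma orb_same:
  assumes "p permutes H" "finite H" "g \<in> orb p h"
  shows "orb p g = orb p h"
proof -
  obtain a where a: "g = (p ^^ a) h" using assms(3) unfolding orb_def by auto
  note c = cyc_len_pos[OF assms(1,2), of h]
  define n where "n = cyc_len p h"
  have nz: "(n * Suc a) mod n = 0" by simp
  have "(p ^^ ((n * Suc a) mod n)) h = (p ^^ (n * Suc a)) h"
    by (rule funpow_mod_eq) (use c n_def in simp)
  then have cyc: "(p ^^ (n * Suc a)) h = h" using nz by simp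
  have "orb p g \<subseteq> orb p h"
  proof
    fix x assume "x \<in> orb p g"
    then obtain m where m: "x = (p ^^ m) g" unfolding orb_def by auto
    have "x = (p ^^ (m + a)) h" unfolding m a by (rule funpow_split[symmetric])
    then show "x \<in> orb p h" unfolding orb_def by blast
  qed
  moreover have "orb p h \<subseteq> orb p g"
  proof
    fix x assume "x \<in> orb p h"
    then obtain m where m: "x = (p ^^ m) h" unfolding orb_def by auto
    have n1: "1 \<le> n" using c n_def by simp
    have "a \<le> n * a" using mult_le_mono1[OF n1, of a] by simp
    then have ge: "n * Suc a \<ge> a" unfolding mult_Suc_right by linarith
    have "(p ^^ (m + (n * Suc a - a))) g = (p ^^ (m + (n * Suc a - a) + a)) h"
      unfolding a by (rule funpow_split[symmetric])
    also have "m + (n * Suc a - a) + a = m + n * Suc a" using ge by simp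
    also have "(p ^^ (m + n * Suc a)) h = (p ^^ m) ((p ^^ (n * Suc a)) h)" by (rule funpow_split)
    also have "\<dots> = x" using cyc m by simp
    finally show "x \<in> orb p g" unfolding orb_def by blast
  qed
  ultimately show ?thesis by blast
qed

lemma rep_in: "x \<noteq> {} \<Longrightarrow> rep x \<in> x"
  unfolding rep_def by (simp add: some_in_eq)

lemma rep_orb:
  assumes "p permutes H" "finite H"
  shows "rep (orb p h) \<in> orb p h" "orb p (rep (orb p h)) = orb p h"
proof -
  have ne: "orb p h \<noteq> {}" using self_in_orb[of h p] by blast
  show r: "rep (orb p h) \<in> orb p h" by (rule rep_in[OF ne])
  show "orb p (rep (orb p h)) = orb p h" by (rule orb_same[OF assms r])
qed

lemma orbit_sum:
  assumes "p permutes H" "finite H"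
  shows "(\<Sum>j<cyc_len p (rep (orb p h)). G ((p ^^ j) (rep (orb p h)))) = (\<Sum>g\<in>orb p h. G g)"
proof -
  let ?r = "rep (orb p h)"
  have eq: "orb p h = (\<lambda>j. (p ^^ j) ?r) ` {..<cyc_len p ?r}"
    using rep_orb(2)[OF assms, of h] orb_eq[OF assms, of ?r] by (simp only:)
  have "(\<Sum>g\<in>orb p h. G g) = sum G ((\<lambda>j. (p ^^ j) ?r) ` {..<cyc_len p ?r})"
    using eq by (rule arg_cong)
  also have "\<dots> = sum (G \<circ> (\<lambda>j. (p ^^ j) ?r)) {..<cyc_len p ?r}"
    by (rule sum.reindex[OF cyc_inj[OF assms(1), of ?r]])
  also have "\<dots> = (\<Sum>j<cyc_len p ?r. G ((p ^^ j) ?r))" by (simp only: comp_def)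
  finally show ?thesis by (rule sym)
qed

lemma orbits_sum:
  assumes "p permutes H" "finite H"
  shows "(\<Sum>x\<in>orb p ` H. \<Sum>g\<in>x. G g) = (\<Sum>g\<in>H. G g)"
proof -
  have U: "\<Union> (orb p ` H) = H"
  proof
    show "\<Union> (orb p ` H) \<subseteq> H"
    proof
      fix x assume "x \<in> \<Union> (orb p ` H)"
      then obtain h where h: "h \<in> H" "x \<in> orb p h" by blast
      show "x \<in> H" using orb_subset[OF assms(1) h(1)] h(2) by (rule subsetD)
    qed
    show "H \<subseteq> \<Union> (orb p ` H)"
    proof
      fix x assume x: "x \<in> H"
      have "x \<in> orb p x" by (rule self_in_orb)
      then show "x \<in> \<Union> (orb p ` H)" using x by (rule UN_I[rotated])
    qed
  qed
  have "sum G (\<Union> (orb p ` H)) = (sum \<circ> sum) G (orb p ` H)"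
  proof (rule sum.Union_disjoint)
    show "\<forall>A\<in>orb p ` H. finite A"
    proof
      fix A assume "A \<in> orb p ` H"
      then obtain h where h: "h \<in> H" "A = orb p h" by blast
      show "finite A" unfolding h(2) by (rule finite_subset[OF orb_subset[OF assms(1) h(1)] assms(2)])
    qed
    show "\<forall>A\<in>orb p ` H. \<forall>B\<in>orb p ` H. A \<noteq> B \<longrightarrow> A \<inter> B = {}"
    proof (intro ballI impI)
      fix A B assume A: "A \<in> orb p ` H" and B: "B \<in> orb p ` H" and ne: "A \<noteq> B"
      show "A \<inter> B = {}"
      proof (rule ccontr)
        assume "A \<inter> B \<noteq> {}"
        then obtain g where g: "g \<in> A" "g \<in> B" by blast
        obtain a where a: "A = orb p a" using A by blast
        obtain b where b: "B = orb p b" using B by blast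
        have "orb p g = A" using orb_same[OF assms, of g a] g(1) a by simp
        moreover have "orb p g = B" using orb_same[OF assms, of g b] g(2) b by simp
        ultimately show False using ne by simp
      qed
    qed
  qed
  then show ?thesis unfolding U by (simp only: comp_def)
qed


lemma gen_F1:
  fixes x y :: "nat \<Rightarrow> real" and c :: "nat \<Rightarrow> real"
  shows "(\<Sum>k<n. \<Sum>j<k. c (k - j - 1) * (x j * y k - x k * y j)) =
         (\<Sum>p<n. x p * ((\<Sum>k\<in>{p<..<n}. c (k - p - 1) * y k) - (\<Sum>j<p. c (p - j - 1) * y j)))"
proof (induction n)
  case 0 then show ?case by simp
next
  case (Suc n)
  have split: "\<And>p. p < n \<Longrightarrow> {p<..<Suc n} = insert n {p<..<n}" by auto
  have emp: "{n<..<Suc n} = {}" by auto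
  have "(\<Sum>p<Suc n. x p * ((\<Sum>k\<in>{p<..<Suc n}. c (k - p - 1) * y k) - (\<Sum>j<p. c (p - j - 1) * y j)))
     = (\<Sum>p<n. x p * ((\<Sum>k\<in>{p<..<n}. c (k - p - 1) * y k) - (\<Sum>j<p. c (p - j - 1) * y j)))
       + (\<Sum>p<n. x p * (c (n - p - 1) * y n)) - x n * (\<Sum>j<n. c (n - j - 1) * y j)"
    by (simp add: split emp sum.distrib[symmetric] algebra_simps)
  also have "\<dots> = (\<Sum>k<n. \<Sum>j<k. c (k - j - 1) * (x j * y k - x k * y j))
       + ((\<Sum>p<n. x p * (c (n - p - 1) * y n)) - x n * (\<Sum>j<n. c (n - j - 1) * y j))"
    using Suc.IH by simp
  also have "(\<Sum>p<n. x p * (c (n - p - 1) * y n)) - x n * (\<Sum>j<n. c (n - j - 1) * y j)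
      = (\<Sum>j<n. c (n - j - 1) * (x j * y n - x n * y j))"
    by (simp add: sum_distrib_left sum_subtractf[symmetric] algebra_simps)
  finally show ?case by simp
qed

lemma F2a:
  fixes y :: "nat \<Rightarrow> real"
  assumes "Suc j < n"
  shows "((\<Sum>k\<in>{Suc j<..<n}. y k) - (\<Sum>k<Suc j. y k)) =
         ((\<Sum>k\<in>{j<..<n}. y k) - (\<Sum>k<j. y k)) - y j - y (Suc j)"
proof -
  have "{j<..<n} = insert (Suc j) {Suc j<..<n}" using assms by auto
  then show ?thesis by simp
qed

lemma F2b:
  fixes y :: "nat \<Rightarrow> real"
  assumes "0 < n" "(\<Sum>k<n. y k) = 0"
  shows "((\<Sum>k\<in>{0<..<n}. y k) - (\<Sum>k<0. y k)) =
         ((\<Sum>k\<in>{n-1<..<n}. y k) - (\<Sum>k<n-1. y k)) - y (n-1) - y 0"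
proof -
  have e1: "{n-1<..<n} = {}" by auto
  have "{..<n} = insert 0 {0<..<n}" using assms by auto
  then have a: "(\<Sum>k\<in>{0<..<n}. y k) = - y 0" using assms by simp
  have "{..<n} = insert (n-1) {..<n-1}" using assms by auto
  then have b: "(\<Sum>k<n-1. y k) = - y (n-1)" using assms by simp
  show ?thesis using a b e1 by simp
qed

lemma L1:
  fixes v b :: "nat \<Rightarrow> real"
  assumes "\<And>j. j < p \<Longrightarrow> b j = v j + v (Suc j)"
  shows "(\<Sum>j<p. (-1) ^ (p - j - 1) * b j) = v p - (-1) ^ p * v 0"
  using assms
proof (induction p)
  case 0 then show ?case by simp
next
  case (Suc p)
  have pj: "\<And>x. x < p \<Longrightarrow> p - x = Suc (p - Suc x)" by arith
  have "(\<Sum>j<Suc p. (-1::real) ^ (Suc p - j - 1) * b j) = (\<Sum>j<p. - ((-1) ^ (p - j - 1) * b j)) + b p"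
    by (auto intro!: sum.cong simp: pj)
  also have "\<dots> = - (v p - (-1) ^ p * v 0) + b p" using Suc by (simp add: sum_negf)
  finally show ?case using Suc.prems[of p] by simp
qed

lemma L2:
  fixes v b :: "nat \<Rightarrow> real"
  assumes "\<And>k. p < k \<Longrightarrow> k < n \<Longrightarrow> b k = v k + v (Suc k)" "p < n"
  shows "(\<Sum>k\<in>{p<..<n}. (-1) ^ (k - p - 1) * b k) = v (Suc p) - (-1) ^ (n - p - 1) * v n"
proof -
  obtain d where d: "n = Suc p + d" using assms(2) less_imp_Suc_add by blast
  have "(\<Sum>k\<in>{p<..<Suc p + d}. (-1) ^ (k - p - 1) * b k) = v (Suc p) - (-1) ^ (Suc p + d - p - 1) * v (Suc p + d)"
    using assms(1)[unfolded d]
  proof (induction d)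
    case 0
    have "{p<..<Suc p} = {}" by auto
    then show ?case by simp
  next
    case (Suc d)
    have "{p<..<Suc p + Suc d} = insert (Suc p + d) {p<..<Suc p + d}" by auto
    then have "(\<Sum>k\<in>{p<..<Suc p + Suc d}. (-1::real) ^ (k - p - 1) * b k)
        = (\<Sum>k\<in>{p<..<Suc p + d}. (-1) ^ (k - p - 1) * b k) + (-1) ^ d * b (Suc p + d)" by simp
    also have "\<dots> = v (Suc p) - (-1) ^ d * v (Suc p + d) + (-1) ^ d * (v (Suc p + d) + v (Suc (Suc p + d)))"
      using Suc by simp
    finally show ?case by (simp add: algebra_simps)
  qed
  then show ?thesis using d by simp
qed

lemma V_ident:
  fixes d w b :: "nat \<Rightarrow> real"
  assumes "odd n" "\<And>k. k < n \<Longrightarrow> b k = w k + w (Suc k mod n)"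
  shows "(\<Sum>k<n. \<Sum>j<k. (-1) ^ (k - j - 1) * (d j * b k - d k * b j)) =
         (\<Sum>j<n. d j * (w (Suc j mod n) - w j))"
proof -
  define v where "v i = w (i mod n)" for i
  have bv: "\<And>k. k < n \<Longrightarrow> b k = v k + v (Suc k)" using assms(2) by (simp add: v_def)
  have n0: "0 < n" using assms(1) by (rule odd_pos)
  have "(\<Sum>k<n. \<Sum>j<k. (-1) ^ (k - j - 1) * (d j * b k - d k * b j)) =
        (\<Sum>p<n. d p * ((\<Sum>k\<in>{p<..<n}. (-1) ^ (k - p - 1) * b k) - (\<Sum>j<p. (-1) ^ (p - j - 1) * b j)))"
    by (rule gen_F1)
  also have "\<dots> = (\<Sum>p<n. d p * (w (Suc p mod n) - w p))"
  proof (rule sum.cong[OF refl])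
    fix p assume "p \<in> {..<n}"
    then have p: "p < n" by simp
    have a: "(\<Sum>k\<in>{p<..<n}. (-1) ^ (k - p - 1) * b k) = v (Suc p) - (-1) ^ (n - p - 1) * v n"
      by (rule L2) (use bv p in auto)
    have b: "(\<Sum>j<p. (-1) ^ (p - j - 1) * b j) = v p - (-1) ^ p * v 0"
      by (rule L1) (use bv p in auto)
    have par: "(-1::real) ^ (n - p - 1) = (-1) ^ p"
    proof -
      have "even ((n - p - 1) + p)" using assms(1) p n0 by simp
      then show ?thesis by (metis (no_types) neg_one_even_power neg_one_odd_power even_add)
    qed
    have "v n = v 0" by (simp add: v_def)
    moreover have "v p = w p" using p by (simp add: v_def)
    moreover have "v (Suc p) = w (Suc p mod n)" by (simp add: v_def)
    ultimately show "d p * ((\<Sum>k\<in>{p<..<n}. (-1) ^ (k - p - 1) * b k) - (\<Sum>j<p. (-1) ^ (p - j - 1) * b j))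
        = d p * (w (Suc p mod n) - w p)" using a b par by simp
  qed
  finally show ?thesis .
qed


lemma pos_funpow:
  assumes "p permutes H" "j < cyc_len p r"
  shows "(LEAST i. (p ^^ i) r = (p ^^ j) r) = j"
proof (rule Least_equality)
  fix i assume "(p ^^ i) r = (p ^^ j) r"
  then show "j \<le> i" using cyc_distinct[OF assms(1), of i j r] assms(2) by (meson not_le)
qed simp

lemma swap3:
  "(\<Sum>x\<in>A. \<Sum>k<n x. \<Sum>j<k. \<Sum>g\<in>G. f x k j g) = (\<Sum>g\<in>G. \<Sum>x\<in>A. \<Sum>k<n x. \<Sum>j<k. f x k j g)"
proof -
  have "(\<Sum>x\<in>A. \<Sum>k<n x. \<Sum>j<k. \<Sum>g\<in>G. f x k j g) = (\<Sum>x\<in>A. \<Sum>k<n x. \<Sum>g\<in>G. \<Sum>j<k. f x k j g)"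
    by (rule sum.cong[OF refl], rule sum.cong[OF refl], rule sum.swap)
  also have "\<dots> = (\<Sum>x\<in>A. \<Sum>g\<in>G. \<Sum>k<n x. \<Sum>j<k. f x k j g)"
    by (rule sum.cong[OF refl], rule sum.swap)
  also have "\<dots> = (\<Sum>g\<in>G. \<Sum>x\<in>A. \<Sum>k<n x. \<Sum>j<k. f x k j g)"
    by (rule sum.swap)
  finally show ?thesis .
qed

lemma Pbiv_lin:
  "Pbiv H s0 s1 \<alpha> (\<lambda>b. \<Sum>g\<in>G. c g * B g b) = (\<Sum>g\<in>G. c g * Pbiv H s0 s1 \<alpha> (B g))"
proof -
  have "Pbiv H s0 s1 \<alpha> (\<lambda>b. \<Sum>g\<in>G. c g * B g b) =
     1/4 * (\<Sum>x\<in>rg_vertices H s0. \<Sum>k<cyc_len s0 (rep x). \<Sum>j<k. \<Sum>g\<in>G. c g * ((-1::real) ^ (k - j - 1) *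
          wedge_vec (edge_of s1 ((s0 ^^ j) (rep x))) (edge_of s1 ((s0 ^^ k) (rep x))) \<alpha> (B g)))"
    unfolding Pbiv_def Let_def wedge_vec_def
    by (simp add: sum_distrib_left sum_distrib_right sum_subtractf[symmetric] algebra_simps)
  also have "\<dots> = 1/4 * (\<Sum>g\<in>G. \<Sum>x\<in>rg_vertices H s0. \<Sum>k<cyc_len s0 (rep x). \<Sum>j<k. c g * ((-1::real) ^ (k - j - 1) *
          wedge_vec (edge_of s1 ((s0 ^^ j) (rep x))) (edge_of s1 ((s0 ^^ k) (rep x))) \<alpha> (B g)))"
    by (rule arg_cong[where f="\<lambda>t. 1/4 * t"], rule swap3)
  also have "\<dots> = (\<Sum>g\<in>G. c g * Pbiv H s0 s1 \<alpha> (B g))"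
    unfolding Pbiv_def Let_def by (simp add: sum_distrib_left sum_distrib_right algebra_simps)
  finally show ?thesis .
qed

locale rgl =
  fixes H :: "'h set" and s0 s1 :: "'h \<Rightarrow> 'h"
  assumes fin: "finite H" and p0: "s0 permutes H" and p1: "s1 permutes H"
    and inv1: "\<forall>h\<in>H. s1 h \<noteq> h \<and> s1 (s1 h) = h"
begin

abbreviation "E \<equiv> edge_of s1"
abbreviation "s2 \<equiv> face_perm s0 s1"

lemma p2: "s2 permutes H"
  unfolding face_perm_def by (rule permutes_compose[OF p1 permutes_inv[OF p0]])

lemma s0H: "u \<in> H \<Longrightarrow> s0 u \<in> H" and s1H: "u \<in> H \<Longrightarrow> s1 u \<in> H"
  using permutes_in_image[OF p0] permutes_in_image[OF p1] by auto

lemma s2s1s0: "u \<in> H \<Longrightarrow> s2 (s1 (s0 u)) = u"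
  unfolding face_perm_def using inv1 s0H permutes_inverses(2)[OF p0] by auto

lemma Es1: "g \<in> H \<Longrightarrow> E (s1 g) = E g"
  unfolding edge_of_def using inv1 by auto

lemma Eeq: "g \<in> H \<Longrightarrow> u \<in> H \<Longrightarrow> E g = E u \<longleftrightarrow> g = u \<or> g = s1 u"
  unfolding edge_of_def using inv1 by (auto simp: doubleton_eq_iff)

lemma vertex_lemma:
  assumes odd: "\<forall>h\<in>H. odd (valence s0 h)"
    and bW: "\<forall>u\<in>H. \<beta> (E u) = W u + W (s0 u)"
  shows "Pbiv H s0 s1 \<alpha> \<beta> = 1/4 * (\<Sum>u\<in>H. \<alpha> (E u) * (W (s0 u) - W u))"
proof -
  have "\<And>x. x \<in> orb s0 ` H \<Longrightarrow> (let h = rep x in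
        \<Sum>k<cyc_len s0 h. \<Sum>j<k. (-1::real) ^ (k - j - 1) *
          wedge_vec (E ((s0 ^^ j) h)) (E ((s0 ^^ k) h)) \<alpha> \<beta>) = (\<Sum>u\<in>x. \<alpha> (E u) * (W (s0 u) - W u))"
  proof -
    fix x assume "x \<in> orb s0 ` H"
    then obtain h where h: "h \<in> H" "x = orb s0 h" by auto
    define r where "r = rep x"
    have rH: "r \<in> H" using rep_orb(1)[OF p0 fin, of h] orb_subset[OF p0 h(1)] h r_def by auto
    define n where "n = cyc_len s0 r"
    have oddn: "odd n" using odd rH unfolding n_def valence_def by auto
    note c = cyc_len_pos[OF p0 fin, of r]
    have sm: "(s0 ^^ (Suc k mod n)) r = s0 ((s0 ^^ k) r)" for k
    proof -
      have "(s0 ^^ (Suc k mod n)) r = (s0 ^^ Suc k) r" by (rule funpow_mod_eq) (use c n_def in simp)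
      then show ?thesis by simp
    qed
    have "(\<Sum>k<n. \<Sum>j<k. (-1::real) ^ (k - j - 1) *
          wedge_vec (E ((s0 ^^ j) r)) (E ((s0 ^^ k) r)) \<alpha> \<beta>)
       = (\<Sum>k<n. \<Sum>j<k. (-1) ^ (k - j - 1) * ((\<lambda>j. \<alpha> (E ((s0 ^^ j) r))) j * (\<lambda>k. \<beta> (E ((s0 ^^ k) r))) k
            - (\<lambda>j. \<alpha> (E ((s0 ^^ j) r))) k * (\<lambda>k. \<beta> (E ((s0 ^^ k) r))) j))"
      unfolding wedge_vec_def by simp
    also have "\<dots> = (\<Sum>j<n. (\<lambda>j. \<alpha> (E ((s0 ^^ j) r))) j * ((\<lambda>j. W ((s0 ^^ j) r)) (Suc j mod n) - (\<lambda>j. W ((s0 ^^ j) r)) j))"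
    proof (rule V_ident[OF oddn])
      fix k assume "k < n"
      show "\<beta> (E ((s0 ^^ k) r)) = W ((s0 ^^ k) r) + W ((s0 ^^ (Suc k mod n)) r)"
        using bW funpow_in_H[OF p0 rH, of k] sm by simp
    qed
    also have "\<dots> = (\<Sum>j<n. \<alpha> (E ((s0 ^^ j) r)) * (W (s0 ((s0 ^^ j) r)) - W ((s0 ^^ j) r)))"
      using sm by simp
    also have "\<dots> = (\<Sum>u\<in>x. \<alpha> (E u) * (W (s0 u) - W u))"
      unfolding n_def r_def h(2) by (rule orbit_sum[OF p0 fin])
    finally show "(let h = rep x in
        \<Sum>k<cyc_len s0 h. \<Sum>j<k. (-1::real) ^ (k - j - 1) *
          wedge_vec (E ((s0 ^^ j) h)) (E ((s0 ^^ k) h)) \<alpha> \<beta>) = (\<Sum>u\<in>x. \<alpha> (E u) * (W (s0 u) - W u))"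
      unfolding Let_def r_def n_def .
  qed
  then have "Pbiv H s0 s1 \<alpha> \<beta> = 1/4 * (\<Sum>x\<in>orb s0 ` H. \<Sum>u\<in>x. \<alpha> (E u) * (W (s0 u) - W u))"
    unfolding Pbiv_def rg_vertices_def by simp
  also have "\<dots> = 1/4 * (\<Sum>u\<in>H. \<alpha> (E u) * (W (s0 u) - W u))"
    by (simp add: orbits_sum[OF p0 fin])
  finally show ?thesis .
qed


definition af :: "('h set \<Rightarrow> real) \<Rightarrow> 'h \<Rightarrow> nat \<Rightarrow> nat \<Rightarrow> real" where
  "af Y r n j = (\<Sum>k\<in>{j<..<n}. Y (E ((s2 ^^ k) r))) - (\<Sum>k<j. Y (E ((s2 ^^ k) r)))"

definition AA :: "('h set \<Rightarrow> real) \<Rightarrow> 'h \<Rightarrow> real" where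
  "AA Y g = af Y (rep (orb s2 g)) (cyc_len s2 (rep (orb s2 g))) (LEAST j. (s2 ^^ j) (rep (orb s2 g)) = g)"

lemma AA_pos:
  assumes "j < cyc_len s2 (rep (orb s2 h))"
  shows "AA Y ((s2 ^^ j) (rep (orb s2 h))) = af Y (rep (orb s2 h)) (cyc_len s2 (rep (orb s2 h))) j"
proof -
  let ?r = "rep (orb s2 h)"
  have "(s2 ^^ j) ?r \<in> orb s2 ?r" unfolding orb_def by blast
  then have "orb s2 ((s2 ^^ j) ?r) = orb s2 h"
    using orb_same[OF p2 fin] rep_orb(2)[OF p2 fin, of h] by metis
  then show ?thesis unfolding AA_def using pos_funpow[OF p2 assms] by simp
qed

lemma g_pos:
  "\<exists>j < cyc_len s2 (rep (orb s2 g)). g = (s2 ^^ j) (rep (orb s2 g))"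
proof -
  have "g \<in> orb s2 (rep (orb s2 g))" using rep_orb(2)[OF p2 fin, of g] self_in_orb by metis
  then show ?thesis using orb_eq[OF p2 fin, of "rep (orb s2 g)"] by auto
qed

lemma face_lemma:
  "Omega H s0 s1 X Y = (\<Sum>g\<in>H. X (E g) * AA Y g)"
proof -
  have "\<And>f. f \<in> orb s2 ` H \<Longrightarrow> eta_face s0 s1 f X Y = (\<Sum>g\<in>f. X (E g) * AA Y g)"
  proof -
    fix f assume "f \<in> orb s2 ` H"
    then obtain h where h: "h \<in> H" "f = orb s2 h" by auto
    define r where "r = rep f"
    define n where "n = cyc_len s2 r"
    have "eta_face s0 s1 f X Y = (\<Sum>k<n. \<Sum>j<k. (\<lambda>_. 1::real) (k - j - 1) *
        ((\<lambda>j. X (E ((s2 ^^ j) r))) j * (\<lambda>k. Y (E ((s2 ^^ k) r))) k -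
         (\<lambda>j. X (E ((s2 ^^ j) r))) k * (\<lambda>k. Y (E ((s2 ^^ k) r))) j))"
      unfolding eta_face_def Let_def wedge_form_def r_def n_def by simp
    also have "\<dots> = (\<Sum>p<n. X (E ((s2 ^^ p) r)) * af Y r n p)"
      using gen_F1[where c="\<lambda>_. 1" and x="\<lambda>j. X (E ((s2 ^^ j) r))" and y="\<lambda>k. Y (E ((s2 ^^ k) r))" and n=n]
      unfolding af_def by simp
    also have "\<dots> = (\<Sum>p<n. X (E ((s2 ^^ p) r)) * AA Y ((s2 ^^ p) r))"
      using AA_pos[of _ h Y] unfolding n_def r_def h(2) by simp
    also have "\<dots> = (\<Sum>g\<in>f. X (E g) * AA Y g)"
      unfolding n_def r_def h(2) by (rule orbit_sum[OF p2 fin])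
    finally show "eta_face s0 s1 f X Y = (\<Sum>g\<in>f. X (E g) * AA Y g)" .
  qed
  then have "Omega H s0 s1 X Y = (\<Sum>f\<in>orb s2 ` H. \<Sum>g\<in>f. X (E g) * AA Y g)"
    unfolding Omega_def rg_faces_def by simp
  also have "\<dots> = (\<Sum>g\<in>H. X (E g) * AA Y g)" by (rule orbits_sum[OF p2 fin])
  finally show ?thesis .
qed

lemma local_rule:
  assumes ct: "cell_tangent H s0 s1 Y" and g: "g \<in> H"
  shows "AA Y (s2 g) = AA Y g - Y (E g) - Y (E (s2 g))"
proof -
  define r where "r = rep (orb s2 g)"
  define n where "n = cyc_len s2 r"
  obtain j where j: "j < n" "g = (s2 ^^ j) r" using g_pos[of g] unfolding r_def n_def by auto
  have Ag: "AA Y g = af Y r n j" using AA_pos[of j g Y] j unfolding r_def n_def by simp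
  have sg: "s2 g = (s2 ^^ Suc j) r" using j by simp
  show ?thesis
  proof (cases "Suc j < n")
    case True
    have "AA Y (s2 g) = af Y r n (Suc j)" using AA_pos[of "Suc j" g Y] True sg unfolding r_def n_def by simp
    then show ?thesis using Ag F2a[OF True, of "\<lambda>k. Y (E ((s2 ^^ k) r))"] sg j unfolding af_def by simp
  next
    case False
    note c = cyc_len_pos[OF p2 fin, of r]
    have jn: "j = n - 1" "Suc j = n" using False j by auto
    have s2g: "s2 g = (s2 ^^ 0) r" using sg jn c n_def by simp
    have "AA Y (s2 g) = af Y r n 0" using AA_pos[of 0 g Y] c s2g unfolding r_def n_def by simp
    moreover have "orb s2 g \<in> rg_faces H s0 s1" unfolding rg_faces_def using g by blast
    then have "(\<Sum>k<n. Y (E ((s2 ^^ k) r))) = 0"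
      using ct unfolding cell_tangent_def perimeter_def Let_def r_def n_def by blast
    moreover have "0 < n" using c n_def by simp
    ultimately show ?thesis using Ag F2b[of n "\<lambda>k. Y (E ((s2 ^^ k) r))"] s2g j jn unfolding af_def by simp
  qed
qed

end

theorem mainTheorem6:
  fixes H :: "'h set" and s0 s1 :: "'h \<Rightarrow> 'h" and e :: "'h set"
  assumes "ribbon_graph H s0 s1"
    and "\<forall>h\<in>H. 3 \<le> valence s0 h"
    and "\<forall>h\<in>H. odd (valence s0 h)"
    and "e \<in> rg_edges H s1"
  shows "\<forall>Y. cell_tangent H s0 s1 Y \<longrightarrow>
           Omega_contr H s0 s1 (P_contr H s0 s1 (dl e)) Y = Y e"
proof (intro allI impI)
  fix Y assume ct: "cell_tangent H s0 s1 Y"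
  interpret rgl H s0 s1 using assms(1) unfolding ribbon_graph_def by unfold_locales auto
  define A where "A = AA Y"
  define \<beta> where "\<beta> = (\<lambda>b. \<Sum>g\<in>H. A g * dl (edge_of s1 g) b)"
  define W where "W u = A (s1 u) - Y (edge_of s1 u)" for u
  have rel: "A (s1 (s0 u)) = A u + Y (edge_of s1 (s0 u)) + Y (edge_of s1 u)" if u: "u \<in> H" for u
  proof -
    have "s1 (s0 u) \<in> H" using u s0H s1H by blast
    from local_rule[OF ct this] show ?thesis
      using s2s1s0[OF u] Es1[OF s0H[OF u]] unfolding A_def by simp
  qed
  have pair: "{g \<in> H. edge_of s1 u = edge_of s1 g} = {u, s1 u}" if u: "u \<in> H" for u
    using Eeq[OF _ u] u s1H[OF u] by auto
  have bW: "\<forall>u\<in>H. \<beta> (edge_of s1 u) = W u + W (s0 u)"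
  proof
    fix u assume u: "u \<in> H"
    have "\<beta> (edge_of s1 u) = (\<Sum>g\<in>{g \<in> H. edge_of s1 u = edge_of s1 g}. A g)"
      unfolding \<beta>_def dl_def by (simp add: sum.inter_filter[OF fin] if_distrib cong: if_cong)
    also have "\<dots> = A u + A (s1 u)"
    proof -
      have "u \<noteq> s1 u" using inv1 u by metis
      then show ?thesis using pair[OF u] by simp
    qed
    also have "\<dots> = W u + W (s0 u)" unfolding W_def using rel[OF u] by simp
    finally show "\<beta> (edge_of s1 u) = W u + W (s0 u)" .
  qed
  obtain h0 where h0: "h0 \<in> H" "e = edge_of s1 h0" using assms(4) unfolding rg_edges_def by auto
  have "Omega_contr H s0 s1 (P_contr H s0 s1 (dl e)) Y
      = (\<Sum>g\<in>H. P_contr H s0 s1 (dl e) (edge_of s1 g) * AA Y g)"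
    unfolding Omega_contr_def by (rule face_lemma)
  also have "\<dots> = (\<Sum>g\<in>H. A g * Pbiv H s0 s1 (dl e) (dl (edge_of s1 g)))"
    unfolding P_contr_def A_def by (simp add: mult.commute)
  also have "\<dots> = Pbiv H s0 s1 (dl e) \<beta>"
    unfolding \<beta>_def by (rule Pbiv_lin[symmetric])
  also have "\<dots> = 1/4 * (\<Sum>u\<in>H. dl e (edge_of s1 u) * (W (s0 u) - W u))"
    by (rule vertex_lemma[OF assms(3) bW])
  also have "(\<Sum>u\<in>H. dl e (edge_of s1 u) * (W (s0 u) - W u))
      = (\<Sum>u\<in>{g \<in> H. edge_of s1 h0 = edge_of s1 g}. W (s0 u) - W u)"
    unfolding dl_def h0(2) by (auto simp: sum.inter_filter[OF fin] eq_commute intro!: sum.cong)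
  also have "\<dots> = (W (s0 h0) - W h0) + (W (s0 (s1 h0)) - W (s1 h0))"
  proof -
    have "h0 \<noteq> s1 h0" using inv1 h0(1) by metis
    then show ?thesis using pair[OF h0(1)] by simp
  qed
  also have "\<dots> = 4 * Y e"
  proof -
    have ss: "s1 (s1 h0) = h0" using inv1 h0(1) by metis
    show ?thesis using rel[OF h0(1)] rel[OF s1H[OF h0(1)]] h0 Es1[OF h0(1)] ss unfolding W_def by simp
  qed
  finally show "Omega_contr H s0 s1 (P_contr H s0 s1 (dl e)) Y = Y e" by simp
qed

end
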